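(* Let $G$ be an edge-colored graph. Then $G$ contains a spanning bipartite subgraph $H$ such that $2d_{H}^{c}(v)+3d_{H}(v)\geq d_G^{c}(v)+d_G(v)$ for every vertex $v\in V(H)$.
   Context: An edge-colored graph is a finite simple graph $G$ with a map $C:E(G)\to\mathbb{N}$; subgraphs inherit the coloring. For a subgraph $H$ and $v\in V(H)$, $d_H(v)$ is the degree of $v$ in $H$ and $d_H^c(v)$ is the number of distinct colors on edges of $H$ incident to $v$. *)

theory Defs
  imports Main
begin

text \<open>A spanning subgraph is given by an edge set F \<subseteq> E
on the same vertex set V; it inherits the colouring.\<close>

definition simple_graph :: "'a set \<Rightarrow> 'a set set \<Rightarrow> bool" where
  "simple_graph V E \<longleftrightarrow> finite V \<and> (\<forall>e\<in>E. e \<subseteq> V \<and> card e = 2)"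

definition inc_edges :: "'a set set \<Rightarrow> 'a \<Rightarrow> 'a set set" where
  "inc_edges E v = {e \<in> E. v \<in> e}"

definition degree :: "'a set set \<Rightarrow> 'a \<Rightarrow> nat" where
  "degree E v = card (inc_edges E v)"

definition color_degree :: "('a set \<Rightarrow> nat) \<Rightarrow> 'a set set \<Rightarrow> 'a \<Rightarrow> nat" where
  "color_degree C E v = card (C ` inc_edges E v)"

definition bipartite :: "'a set \<Rightarrow> 'a set set \<Rightarrow> bool" where
  "bipartite V F \<longleftrightarrow> (\<exists>X \<subseteq> V. \<forall>e\<in>F. card (e \<inter> X) = 1 \<and> card (e - X) = 1)"

end

theory Submission
  imports Defs
begin

lemma cut_iff:
  assumes "a \<noteq> b"
  shows "(card ({a,b} \<inter> X) = 1 \<and> card ({a,b} - X) = 1) \<longleftrightarrow> (a \<in> X \<longleftrightarrow> b \<notin> X)"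
  using assms by (cases "a \<in> X"; cases "b \<in> X") (auto simp: insert_Diff_if Int_insert_left)

theorem lemma7:
  fixes V :: "'a set" and E :: "'a set set" and C :: "'a set \<Rightarrow> nat"
  assumes "simple_graph V E"
  shows "\<exists>F \<subseteq> E. bipartite V F \<and>
           (\<forall>v\<in>V. 2 * color_degree C F v + 3 * degree F v
                    \<ge> color_degree C E v + degree E v)"
proof -
  from assms have finV: "finite V" and Esub: "\<forall>e\<in>E. e \<subseteq> V \<and> card e = 2"
    by (auto simp: simple_graph_def)
  have finE: "finite E"
    using finV Esub by (meson Pow_iff finite_Pow_iff rev_finite_subset subsetI)
  define pick where "pick v c = (SOME e. e \<in> inc_edges E v \<and> C e = c)" for v c
  define R where "R v = pick v ` (C ` inc_edges E v)" for v
  have pick: "pick v c \<in> inc_edges E v \<and> C (pick v c) = c" if "c \<in> C ` inc_edges E v" for v c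
    unfolding pick_def by (rule someI_ex) (use that in auto)
  have Rsub: "R v \<subseteq> inc_edges E v" for v using pick by (auto simp: R_def)
  have Rinj: "inj_on C (R v)" for v
    unfolding inj_on_def R_def using pick by force
  have RC: "C ` R v = C ` inc_edges E v" for v
    using pick Rsub unfolding R_def by (force simp: image_iff)
  have Rcard: "card (R v) = color_degree C E v" for v
    using card_image[OF Rinj[of v]] RC[of v] by (simp add: color_degree_def)
  define cut where "cut X = {e\<in>E. card (e \<inter> X) = 1 \<and> card (e - X) = 1}" for X
  define w where "w e = card {u\<in>e. e \<in> R u} + 1" for e
  define W where "W X = sum w (cut X)" for X
  have "finite (W ` Pow V)" "W ` Pow V \<noteq> {}" using finV by auto
  then have "Max (W ` Pow V) \<in> W ` Pow V" by (rule Max_in)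
  then obtain X where XV: "X \<subseteq> V" and XM: "W X = Max (W ` Pow V)" by auto
  have Xmax: "W Y \<le> W X" if "Y \<subseteq> V" for Y
    using that XM \<open>finite (W ` Pow V)\<close> by auto
  show ?thesis
  proof (intro exI[of _ "cut X"] conjI ballI)
    show "cut X \<subseteq> E" by (auto simp: cut_def)
    show "bipartite V (cut X)" unfolding bipartite_def cut_def using XV by auto
    fix v assume vV: "v \<in> V"
    define I where "I = inc_edges E v"
    define H where "H = I \<inter> cut X"
    have incF: "inc_edges (cut X) v = H" by (auto simp: inc_edges_def I_def H_def cut_def)
    have finI: "finite I" using finE by (simp add: I_def inc_edges_def)
    define Y where "Y = (if v \<in> X then X - {v} else insert v X)"
    have YV: "Y \<subseteq> V" using XV vV by (auto simp: Y_def)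
    have cutY: "e \<in> cut Y \<longleftrightarrow> (if v \<in> e then e \<notin> cut X else e \<in> cut X)" if eE: "e \<in> E" for e
    proof -
      from eE Esub have "card e = 2" by auto
      then obtain a b where e: "e = {a,b}" "a \<noteq> b" by (auto simp: card_2_iff)
      have Ym: "x \<in> Y \<longleftrightarrow> (if x = v then x \<notin> X else x \<in> X)" for x
        by (auto simp: Y_def)
      show ?thesis unfolding cut_def using eE cut_iff[OF e(2), of X] cut_iff[OF e(2), of Y]
        unfolding e(1)[symmetric] using Ym[of a] Ym[of b] e by auto
    qed
    have cY: "cut Y = (cut X - I) \<union> (I - cut X)"
    proof (rule set_eqI)
      fix e
      have cE: "cut Z \<subseteq> E" for Z by (auto simp: cut_def)
      show "e \<in> cut Y \<longleftrightarrow> e \<in> (cut X - I) \<union> (I - cut X)"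
      proof (cases "e \<in> E")
        case True
        then show ?thesis using cutY[OF True] by (auto simp: I_def inc_edges_def)
      next
        case False
        then show ?thesis using cE by (auto simp: I_def inc_edges_def)
      qed
    qed
    have fincut: "finite (cut Z)" for Z using finE by (simp add: cut_def)
    have "W Y = sum w (cut X - I) + sum w (I - cut X)"
      unfolding W_def cY by (rule sum.union_disjoint) (use fincut finI in auto)
    moreover have "W X = sum w (cut X - I) + sum w H"
    proof -
      have "cut X = (cut X - I) \<union> H" by (auto simp: H_def)
      moreover have "sum w ((cut X - I) \<union> H) = sum w (cut X - I) + sum w H"
        by (rule sum.union_disjoint) (use fincut finI in \<open>auto simp: H_def\<close>)
      ultimately show ?thesis unfolding W_def by metis
    qed
    ultimately have key: "sum w (I - cut X) \<le> sum w H" using Xmax[OF YV] by linarith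
    define o' where "o' e = card {u\<in>e - {v}. e \<in> R u}" for e
    have o1: "o' e \<le> 1" if "e \<in> I" for e
    proof -
      from that Esub have "card e = 2" "v \<in> e" by (auto simp: I_def inc_edges_def)
      then have "card (e - {v}) = 1" by simp
      moreover have "finite (e - {v})" using \<open>card e = 2\<close> card.infinite by fastforce
      ultimately show ?thesis unfolding o'_def
        by (metis (no_types, lifting) card_mono mem_Collect_eq subsetI)
    qed
    have wdec: "w e = 1 + (if e \<in> R v then 1 else 0) + o' e" if "e \<in> I" for e
    proof -
      from that Esub have "card e = 2" "v \<in> e" by (auto simp: I_def inc_edges_def)
      have fe: "finite e" using \<open>card e = 2\<close> card.infinite by fastforce
      have "{u\<in>e. e \<in> R u} = (if e \<in> R v then {v} else {}) \<union> {u\<in>e - {v}. e \<in> R u}"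
        using \<open>v \<in> e\<close> by auto
      moreover have "card ((if e \<in> R v then {v} else {}) \<union> {u\<in>e - {v}. e \<in> R u})
          = (if e \<in> R v then 1 else 0) + o' e"
        unfolding o'_def using fe by (subst card_Un_disjoint) auto
      ultimately show ?thesis by (simp add: w_def)
    qed
    have sdec: "sum w S = card S + card (R v \<inter> S) + sum o' S" if "S \<subseteq> I" for S
    proof -
      have fS: "finite S" using that finI finite_subset by blast
      have "sum w S = sum (\<lambda>e. 1 + (if e \<in> R v then 1 else 0) + o' e) S"
        using that wdec by (intro sum.cong) auto
      also have "\<dots> = card S + sum (\<lambda>e. if e \<in> R v then 1 else 0) S + sum o' S"
        by (simp only: sum.distrib) simp
      also have "sum (\<lambda>e. if e \<in> R v then 1 else 0::nat) S = card (R v \<inter> S)"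
        using fS by (simp add: sum.If_cases Int_commute)
      finally show ?thesis .
    qed
    have HI: "H \<subseteq> I" "I - cut X \<subseteq> I" by (auto simp: H_def)
    have oH: "sum o' H \<le> card H"
    proof -
      have "sum o' H \<le> sum (\<lambda>_. 1) H" using HI o1 by (intro sum_mono) auto
      then show ?thesis by simp
    qed
    have finH: "finite H" using HI finI finite_subset by blast
    have rH: "card (R v \<inter> H) \<le> color_degree C (cut X) v"
    proof -
      have "card (R v \<inter> H) = card (C ` (R v \<inter> H))"
        by (rule card_image[symmetric]) (meson Rinj inf_le1 inj_on_subset)
      also have "\<dots> \<le> card (C ` H)" using finH by (intro card_mono) auto
      finally show ?thesis by (simp add: color_degree_def incF)
    qed
    have cI: "card H + card (I - cut X) = card I"
    proof -
      have "I = H \<union> (I - cut X)" by (auto simp: H_def)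
      then show ?thesis using finI
        by (metis Diff_Diff_Int H_def card_Diff_subset_Int card_mono finite_Int inf_commute
            inf_le1 le_add_diff_inverse)
    qed
    have cR: "card (R v \<inter> H) + card (R v \<inter> (I - cut X)) = card (R v)"
    proof -
      have "R v = (R v \<inter> H) \<union> (R v \<inter> (I - cut X))" using Rsub[of v] by (auto simp: H_def I_def)
      moreover have "finite (R v)" using Rsub[of v] finI finite_subset I_def by blast
      ultimately show ?thesis
        by (metis (no_types, lifting) card_Un_disjoint Diff_disjoint H_def Int_Diff
            Int_assoc Int_commute finite_Int inf_bot_right)
    qed
    have "sum w (I - cut X) = card (I - cut X) + card (R v \<inter> (I - cut X)) + sum o' (I - cut X)"
      using sdec HI by blast
    moreover have "sum w H = card H + card (R v \<inter> H) + sum o' H" using sdec HI by blast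
    ultimately show "color_degree C E v + degree E v
        \<le> 2 * color_degree C (cut X) v + 3 * degree (cut X) v"
      using key oH rH cI cR Rcard[of v]
      unfolding degree_def incF I_def[symmetric] by linarith
  qed
qed

end
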